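(* Let $G$ be a graph and let $v$ be a cut vertex of $G$ which decomposes $G$ into $G_1=G(V_1)$ and $H=G(U)$, where $H$ is a cycle. Let $f$ be a divisor on $G$ such that $f_{N(H)}$ is good, and put $r=\rho_{G_1}(f_{G/H})$. Then $$\rho_G(f)=\begin{cases} r & \text{if } \rho_{G_1}(f_{G/H}-2\epsilon_v)\ge r-1,\\ r-1 & \text{if } \rho_{G_1}(f_{G/H}-2\epsilon_v)=r-2.\end{cases}$$
   Context: Graphs are finite, undirected, connected, loopless, possibly with multiple edges; $G(W)$ is the induced subgraph on $W$. A cycle is a connected graph with at least two vertices, all of degree $2$. A vertex $v$ is a cut vertex if removing it disconnects $G$; it decomposes $G$ into $G_1=G(V_1)$ and $H=G(U)$ if $V(G)=V_1\cup U$, $V_1\cap U=\{v\}$, both induced subgraphs are connected, and no edge joins $V_1\setminus\{v\}$ to $U\setminus\{v\}$. A divisor is a function $V\to\mathbb{Z}$, $\deg(f)=\sum f(u)$; $\epsilon_v$ is the divisor with value $1$ at $v$ and $0$ elsewhere. Contraction: $f_{G/H}$ is the divisor on $G_1$ with $f_{G/H}(u)=f(u)$ for $u\in V_1\setminus\{v\}$, $f_{G/H}(v)=\sum_{u\in U}f(u)$. Zero: $f_{N(H)}$ is the divisor on $H$ with $f_{N(H)}(u)=f(u)$ for $u\in U\setminus\{v\}$ and $f_{N(H)}(v)=-\sum_{u\in U\setminus\{v\}}f(u)$. Laplacian $\Delta_X(u,u)=\deg(u)$, $\Delta_X(u,w)=-e(u,w)$ for $u\ne w$; $f\sim g$ on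 $X$ if $g=f+x\Delta_X$, $x$ integral. Effective: all values $\ge0$; L-effective: equivalent to an effective divisor. A degree-$0$ divisor on the cycle $H$ is good if it is L-effective on $H$, bad otherwise. The rank $\rho_X(f)$ on a graph $X$ is $-1$ if $f$ is not L-effective on $X$, otherwise the largest $r\ge0$ with $f-\lambda$ L-effective on $X$ for all effective $\lambda$ of degree $r$ on $X$. *)

theory Defs
  imports Main
begin

text \<open>A (multi)graph on a finite vertex set W is given by an edge-multiplicity
function e (e u w = number of edges joining u and w). Induced subgraphs G(W')
are (W', e). Divisors are functions 'a => int, only their values on the
vertex set matter.\<close>

definition adj_in :: "'a set \<Rightarrow> ('a \<Rightarrow> 'a \<Rightarrow> nat) \<Rightarrow> 'a \<Rightarrow> 'a \<Rightarrow> bool" where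
  "adj_in W e u w \<longleftrightarrow> u \<in> W \<and> w \<in> W \<and> e u w > 0"

definition connected_on :: "'a set \<Rightarrow> ('a \<Rightarrow> 'a \<Rightarrow> nat) \<Rightarrow> bool" where
  "connected_on W e \<longleftrightarrow> W \<noteq> {} \<and> (\<forall>u\<in>W. \<forall>w\<in>W. (adj_in W e)\<^sup>*\<^sup>* u w)"

definition graph :: "'a set \<Rightarrow> ('a \<Rightarrow> 'a \<Rightarrow> nat) \<Rightarrow> bool" where
  "graph W e \<longleftrightarrow> finite W \<and> (\<forall>u w. e u w = e w u) \<and> (\<forall>u. e u u = 0) \<and> connected_on W e"

definition vdeg :: "'a set \<Rightarrow> ('a \<Rightarrow> 'a \<Rightarrow> nat) \<Rightarrow> 'a \<Rightarrow> nat" where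
  "vdeg W e u = (\<Sum>w\<in>W. e u w)"

definition is_cycle :: "'a set \<Rightarrow> ('a \<Rightarrow> 'a \<Rightarrow> nat) \<Rightarrow> bool" where
  "is_cycle W e \<longleftrightarrow> graph W e \<and> card W \<ge> 2 \<and> (\<forall>u\<in>W. vdeg W e u = 2)"

definition cut_vertex :: "'a set \<Rightarrow> ('a \<Rightarrow> 'a \<Rightarrow> nat) \<Rightarrow> 'a \<Rightarrow> bool" where
  "cut_vertex V e v \<longleftrightarrow> v \<in> V \<and> \<not> connected_on (V - {v}) e"

definition decomposes :: "'a set \<Rightarrow> ('a \<Rightarrow> 'a \<Rightarrow> nat) \<Rightarrow> 'a \<Rightarrow> 'a set \<Rightarrow> 'a set \<Rightarrow> bool" where
  "decomposes V e v V1 U \<longleftrightarrow> V = V1 \<union> U \<and> V1 \<inter> U = {v} \<and>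
     connected_on V1 e \<and> connected_on U e \<and>
     (\<forall>a\<in>V1 - {v}. \<forall>b\<in>U - {v}. e a b = 0)"

definition laplacian :: "'a set \<Rightarrow> ('a \<Rightarrow> 'a \<Rightarrow> nat) \<Rightarrow> 'a \<Rightarrow> 'a \<Rightarrow> int" where
  "laplacian W e u w = (if u = w then int (vdeg W e u) else - int (e u w))"

definition div_deg :: "'a set \<Rightarrow> ('a \<Rightarrow> int) \<Rightarrow> int" where
  "div_deg W f = (\<Sum>u\<in>W. f u)"

definition effective :: "'a set \<Rightarrow> ('a \<Rightarrow> int) \<Rightarrow> bool" where
  "effective W f \<longleftrightarrow> (\<forall>u\<in>W. f u \<ge> 0)"

definition lin_equiv :: "'a set \<Rightarrow> ('a \<Rightarrow> 'a \<Rightarrow> nat) \<Rightarrow> ('a \<Rightarrow> int) \<Rightarrow> ('a \<Rightarrow> int) \<Rightarrow> bool" where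
  "lin_equiv W e f g \<longleftrightarrow> (\<exists>x :: 'a \<Rightarrow> int. \<forall>w\<in>W. g w = f w + (\<Sum>u\<in>W. x u * laplacian W e u w))"

definition L_effective :: "'a set \<Rightarrow> ('a \<Rightarrow> 'a \<Rightarrow> nat) \<Rightarrow> ('a \<Rightarrow> int) \<Rightarrow> bool" where
  "L_effective W e f \<longleftrightarrow> (\<exists>g. effective W g \<and> lin_equiv W e f g)"

definition div_rank :: "'a set \<Rightarrow> ('a \<Rightarrow> 'a \<Rightarrow> nat) \<Rightarrow> ('a \<Rightarrow> int) \<Rightarrow> int" where
  "div_rank W e f = (if \<not> L_effective W e f then -1
     else int (GREATEST r :: nat. \<forall>lam. effective W lam \<and> div_deg W lam = int r
                                 \<longrightarrow> L_effective W e (\<lambda>u. f u - lam u)))"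

definition eps :: "'a \<Rightarrow> 'a \<Rightarrow> int" where
  "eps v = (\<lambda>u. if u = v then 1 else 0)"

text \<open>f_{G/H}: divisor on G_1 = G(V1).\<close>
definition contract_div :: "'a set \<Rightarrow> 'a \<Rightarrow> ('a \<Rightarrow> int) \<Rightarrow> 'a \<Rightarrow> int" where
  "contract_div U v f = (\<lambda>u. if u = v then (\<Sum>w\<in>U. f w) else f u)"

text \<open>f_{N(H)}: divisor on H = G(U).\<close>
definition zero_div :: "'a set \<Rightarrow> 'a \<Rightarrow> ('a \<Rightarrow> int) \<Rightarrow> 'a \<Rightarrow> int" where
  "zero_div U v f = (\<lambda>u. if u = v then - (\<Sum>w\<in>U - {v}. f w) else f u)"

definition good :: "'a set \<Rightarrow> ('a \<Rightarrow> 'a \<Rightarrow> nat) \<Rightarrow> ('a \<Rightarrow> int) \<Rightarrow> bool" where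
  "good U e g \<longleftrightarrow> div_deg U g = 0 \<and> L_effective U e g"

end

theory Submission
  imports Defs
begin

definition lapf :: "'a set \<Rightarrow> ('a \<Rightarrow> 'a \<Rightarrow> nat) \<Rightarrow> ('a \<Rightarrow> int) \<Rightarrow> 'a \<Rightarrow> int" where
  "lapf W e x w = (\<Sum>u\<in>W. int (e u w) * (x w - x u))"

definition princ :: "'a set \<Rightarrow> ('a \<Rightarrow> 'a \<Rightarrow> nat) \<Rightarrow> ('a \<Rightarrow> int) \<Rightarrow> bool" where
  "princ W e B \<longleftrightarrow> (\<exists>x. \<forall>w\<in>W. B w = lapf W e x w)"

definition symm :: "('a \<Rightarrow> 'a \<Rightarrow> nat) \<Rightarrow> bool" where
  "symm e \<longleftrightarrow> (\<forall>u w. e u w = e w u)"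

lemma lap_eq_lapf:
  assumes "finite W" "symm e" "w \<in> W" "e w w = 0"
  shows "(\<Sum>u\<in>W. x u * laplacian W e u w) = lapf W e x w"
proof -
  have "(\<Sum>u\<in>W. x u * laplacian W e u w) = x w * laplacian W e w w + (\<Sum>u\<in>W-{w}. x u * laplacian W e u w)"
    using assms by (simp add: sum.remove)
  also have "\<dots> = x w * int (vdeg W e w) - (\<Sum>u\<in>W-{w}. int (e u w) * x u)"
    by (simp add: laplacian_def sum_negf algebra_simps)
  also have "int (vdeg W e w) = (\<Sum>u\<in>W. int (e u w))"
    using assms(2) by (simp add: vdeg_def symm_def)
  also have "\<dots> = int (e w w) + (\<Sum>u\<in>W-{w}. int (e u w))"
    using assms by (simp add: sum.remove)
  finally have 1: "(\<Sum>u\<in>W. x u * laplacian W e u w) = x w * int (e w w) + (\<Sum>u\<in>W-{w}. int (e u w) * (x w - x u))"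
    by (simp add: algebra_simps sum_distrib_left sum_subtractf)
  have "lapf W e x w = int (e w w) * (x w - x w) + (\<Sum>u\<in>W-{w}. int (e u w) * (x w - x u))"
    unfolding lapf_def using assms by (simp add: sum.remove)
  then show ?thesis using 1 assms(4) by simp
qed

lemma lin_equiv_princ:
  assumes "finite W" "symm e" "\<forall>u. e u u = 0"
  shows "lin_equiv W e f g \<longleftrightarrow> princ W e (\<lambda>w. g w - f w)"
proof -
  have L: "\<And>x w. w \<in> W \<Longrightarrow> (\<Sum>u\<in>W. x u * laplacian W e u w) = lapf W e x w"
    using lap_eq_lapf[OF assms(1,2)] assms(3) by blast
  show ?thesis
  proof
    assume "lin_equiv W e f g"
    then obtain x where x: "\<forall>w\<in>W. g w = f w + (\<Sum>u\<in>W. x u * laplacian W e u w)"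
      unfolding lin_equiv_def by blast
    have "\<forall>w\<in>W. g w - f w = lapf W e x w" using x L by simp
    then show "princ W e (\<lambda>w. g w - f w)" unfolding princ_def by blast
  next
    assume "princ W e (\<lambda>w. g w - f w)"
    then obtain x where x: "\<forall>w\<in>W. g w - f w = lapf W e x w"
      unfolding princ_def by blast
    have "\<forall>w\<in>W. g w = f w + (\<Sum>u\<in>W. x u * laplacian W e u w)"
    proof
      fix w assume w: "w \<in> W"
      then have "g w - f w = lapf W e x w" using x by blast
      then show "g w = f w + (\<Sum>u\<in>W. x u * laplacian W e u w)" using L[OF w] by simp
    qed
    then show "lin_equiv W e f g" unfolding lin_equiv_def by blast
  qed
qed

lemma lapf_cong: "(\<And>u. u \<in> W \<Longrightarrow> x u = y u) \<Longrightarrow> w \<in> W \<Longrightarrow> lapf W e x w = lapf W e y w"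
  unfolding lapf_def by (intro sum.cong) auto

lemma lapf_add: "lapf W e (\<lambda>u. x u + y u) w = lapf W e x w + lapf W e y w"
  unfolding lapf_def sum.distrib[symmetric] by (rule sum.cong) (simp_all add: algebra_simps)

lemma lapf_diff: "lapf W e (\<lambda>u. x u - y u) w = lapf W e x w - lapf W e y w"
  unfolding lapf_def sum_subtractf[symmetric] by (rule sum.cong) (simp_all add: algebra_simps)

lemma lapf_shift: "lapf W e (\<lambda>u. x u + c) w = lapf W e x w"
  unfolding lapf_def by simp

lemma double_sum_sym:
  assumes "symm e"
  shows "(\<Sum>w\<in>M. \<Sum>u\<in>M. int (e u w) * x u) = (\<Sum>w\<in>M. \<Sum>u\<in>M. int (e u w) * x w)"
proof -
  have "(\<Sum>w\<in>M. \<Sum>u\<in>M. int (e u w) * x u) = (\<Sum>u\<in>M. \<Sum>w\<in>M. int (e u w) * x u)"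
    by (rule sum.swap)
  also have "\<dots> = (\<Sum>u\<in>M. \<Sum>w\<in>M. int (e w u) * x u)"
    using assms unfolding symm_def by simp
  finally show ?thesis .
qed

lemma lapf_sum_zero:
  assumes "finite W" "symm e"
  shows "(\<Sum>w\<in>W. lapf W e x w) = 0"
proof -
  have "(\<Sum>w\<in>W. lapf W e x w) = (\<Sum>w\<in>W. \<Sum>u\<in>W. int (e u w) * x w) - (\<Sum>w\<in>W. \<Sum>u\<in>W. int (e u w) * x u)"
    unfolding lapf_def by (simp add: algebra_simps sum_subtractf)
  then show ?thesis using double_sum_sym[OF assms(2), where M=W and x=x] by simp
qed

lemma princ_add: "princ W e A \<Longrightarrow> princ W e B \<Longrightarrow> princ W e (\<lambda>w. A w + B w)"
  unfolding princ_def
proof (elim exE)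
  fix x y assume "\<forall>w\<in>W. A w = lapf W e x w" "\<forall>w\<in>W. B w = lapf W e y w"
  then have "\<forall>w\<in>W. A w + B w = lapf W e (\<lambda>u. x u + y u) w" by (simp add: lapf_add)
  then show "\<exists>z. \<forall>w\<in>W. A w + B w = lapf W e z w" by blast
qed

lemma princ_diff: "princ W e A \<Longrightarrow> princ W e B \<Longrightarrow> princ W e (\<lambda>w. A w - B w)"
  unfolding princ_def
proof (elim exE)
  fix x y assume "\<forall>w\<in>W. A w = lapf W e x w" "\<forall>w\<in>W. B w = lapf W e y w"
  then have "\<forall>w\<in>W. A w - B w = lapf W e (\<lambda>u. x u - y u) w" by (simp add: lapf_diff)
  then show "\<exists>z. \<forall>w\<in>W. A w - B w = lapf W e z w" by blast
qed

lemma princ_zero: "princ W e (\<lambda>w. 0)"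
  unfolding princ_def lapf_def by (rule exI[of _ "\<lambda>_. 0"]) simp

lemma princ_cong: "princ W e A \<Longrightarrow> (\<And>w. w \<in> W \<Longrightarrow> A w = B w) \<Longrightarrow> princ W e B"
  unfolding princ_def by auto

lemma princ_deg:
  assumes "finite W" "symm e" "princ W e A"
  shows "(\<Sum>w\<in>W. A w) = 0"
proof -
  obtain x where x: "\<forall>w\<in>W. A w = lapf W e x w" using assms(3) unfolding princ_def by blast
  have "(\<Sum>w\<in>W. A w) = (\<Sum>w\<in>W. lapf W e x w)" using x by simp
  then show ?thesis using lapf_sum_zero[OF assms(1,2)] by simp
qed

lemma L_eff_iff:
  assumes "finite W" "symm e" "\<forall>u. e u u = 0"
  shows "L_effective W e f \<longleftrightarrow> (\<exists>g. effective W g \<and> princ W e (\<lambda>w. g w - f w))"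
  unfolding L_effective_def lin_equiv_princ[OF assms] ..

lemma crossing:
  assumes "connected_on W e" "M \<subseteq> W" "a \<in> M" "b \<in> W" "b \<notin> M"
  shows "\<exists>w\<in>M. \<exists>u\<in>W - M. e w u > 0"
proof -
  have "(adj_in W e)\<^sup>*\<^sup>* a b" using assms unfolding connected_on_def by blast
  then have "b \<in> M \<or> (\<exists>w\<in>M. \<exists>u\<in>W - M. e w u > 0)"
  proof (induction rule: rtranclp_induct)
    case base then show ?case using assms by simp
  next
    case (step y z)
    then show ?case unfolding adj_in_def by blast
  qed
  then show ?thesis using assms by blast
qed

lemma cut_formula:
  assumes "finite W" "symm e" "M \<subseteq> W"
  shows "(\<Sum>w\<in>M. lapf W e x w) = (\<Sum>w\<in>M. \<Sum>u\<in>W-M. int (e u w) * (x w - x u))"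
proof -
  have fM: "finite M" using assms finite_subset by blast
  have split: "\<And>w. lapf W e x w = (\<Sum>u\<in>M. int (e u w) * (x w - x u)) + (\<Sum>u\<in>W-M. int (e u w) * (x w - x u))"
    unfolding lapf_def using assms fM sum.subset_diff[of M W] by (simp add: add.commute)
  have "(\<Sum>w\<in>M. \<Sum>u\<in>M. int (e u w) * (x w - x u)) = 0"
    using double_sum_sym[OF assms(2), where M=M and x=x] by (simp add: algebra_simps sum_subtractf)
  then show ?thesis by (simp add: split sum.distrib)
qed

definition E2 :: "('a \<Rightarrow> 'a \<Rightarrow> nat) \<Rightarrow> 'a set \<Rightarrow> int" where
  "E2 e B = (\<Sum>a\<in>B. \<Sum>b\<in>B. int (e a b))"

lemma E2_insert:
  assumes "finite B" "w \<notin> B" "symm e" "e w w = 0"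
  shows "E2 e (insert w B) = E2 e B + 2 * (\<Sum>b\<in>B. int (e b w))"
proof -
  have "E2 e (insert w B) = (\<Sum>b\<in>insert w B. int (e w b)) + (\<Sum>a\<in>B. \<Sum>b\<in>insert w B. int (e a b))"
    unfolding E2_def using assms by simp
  also have "\<dots> = (\<Sum>b\<in>B. int (e b w)) + (\<Sum>a\<in>B. int (e a w) + (\<Sum>b\<in>B. int (e a b)))"
    using assms by (simp add: symm_def)
  also have "\<dots> = E2 e B + 2 * (\<Sum>b\<in>B. int (e b w))"
    unfolding E2_def by (simp add: sum.distrib)
  finally show ?thesis .
qed

lemma E2_even:
  assumes "finite B" "symm e" "\<forall>u. e u u = 0"
  shows "even (E2 e B)"
  using assms(1)
proof (induction rule: finite_induct)
  case empty then show ?case by (simp add: E2_def)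
next
  case (insert w B) then show ?case using E2_insert[OF insert.hyps(1,2) assms(2)] assms(3) by simp
qed

lemma E2_vdeg:
  assumes "finite W" "M \<subseteq> W"
  shows "(\<Sum>w\<in>M. int (vdeg W e w)) = E2 e M + (\<Sum>w\<in>M. \<Sum>u\<in>W-M. int (e w u))"
proof -
  have fM: "finite M" using assms finite_subset by blast
  have "\<And>w. int (vdeg W e w) = (\<Sum>u\<in>M. int (e w u)) + (\<Sum>u\<in>W-M. int (e w u))"
    unfolding vdeg_def using assms fM by (simp add: sum.subset_diff[of M W])
  then show ?thesis unfolding E2_def by (simp add: sum.distrib)
qed

lemma cycle_inj:
  assumes cyc: "is_cycle W e" and uW: "u \<in> W" and vW: "v \<in> W" and uv: "u \<noteq> v"
  shows "\<not> princ W e (\<lambda>w. eps u w - eps v w)"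
proof
  assume "princ W e (\<lambda>w. eps u w - eps v w)"
  then obtain x where x: "\<And>w. w \<in> W \<Longrightarrow> eps u w - eps v w = lapf W e x w"
    unfolding princ_def by blast
  have fin: "finite W" and sy: "symm e" and ll: "\<forall>u. e u u = 0" and con: "connected_on W e"
    and deg2: "\<And>w. w \<in> W \<Longrightarrow> vdeg W e w = 2"
    using cyc unfolding is_cycle_def graph_def symm_def by auto
  define m where "m = Max (x ` W)"
  define M where "M = {w\<in>W. x w = m}"
  have MW: "M \<subseteq> W" unfolding M_def by auto
  have fM: "finite M" using fin MW finite_subset by blast
  have le: "\<And>w. w \<in> W \<Longrightarrow> x w \<le> m" unfolding m_def using fin by simp
  have "m \<in> x ` W" unfolding m_def using fin uW by (intro Max_in) auto
  then obtain a where a: "a \<in> M" unfolding M_def by auto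
  have "M \<noteq> W"
  proof
    assume "M = W"
    then have "\<And>w. w \<in> W \<Longrightarrow> x w = m" unfolding M_def by auto
    then have "lapf W e x v = 0" unfolding lapf_def using vW by simp
    moreover have "eps u v - eps v v = -1" using uv by (simp add: eps_def)
    ultimately show False using x[OF vW] by simp
  qed
  then obtain b where b: "b \<in> W" "b \<notin> M" using MW by blast
  obtain w0 u0 where w0: "w0 \<in> M" "u0 \<in> W - M" "e w0 u0 > 0"
    using crossing[OF con MW a b] by blast
  define cut where "cut = (\<Sum>w\<in>M. \<Sum>u\<in>W-M. int (e w u))"
  have term_ge: "\<And>w u. w \<in> M \<Longrightarrow> u \<in> W - M \<Longrightarrow> int (e u w) * (x w - x u) \<ge> int (e w u)"
  proof -
    fix w u assume "w \<in> M" "u \<in> W - M"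
    then have "x w - x u \<ge> 1" using le unfolding M_def by force
    moreover have "e u w = e w u" using sy unfolding symm_def by auto
    ultimately show "int (e u w) * (x w - x u) \<ge> int (e w u)"
      by (metis mult.right_neutral mult_left_mono of_nat_0_le_iff)
  qed
  have "(\<Sum>w\<in>M. lapf W e x w) \<ge> cut"
    unfolding cut_formula[OF fin sy MW] cut_def
    by (intro sum_mono) (use term_ge in auto)
  moreover have "(\<Sum>w\<in>M. lapf W e x w) = (\<Sum>w\<in>M. eps u w) - (\<Sum>w\<in>M. eps v w)"
  proof -
    have "(\<Sum>w\<in>M. lapf W e x w) = (\<Sum>w\<in>M. eps u w - eps v w)"
      using x MW by (intro sum.cong) auto
    then show ?thesis by (simp add: sum_subtractf)
  qed
  moreover have "(\<Sum>w\<in>M. eps u w) \<le> 1"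
    using fM by (cases "u \<in> M") (simp_all add: eps_def sum.If_cases)
  moreover have "(\<Sum>w\<in>M. eps v w) \<ge> 0" by (simp add: eps_def sum_nonneg)
  ultimately have c1: "cut \<le> 1" by linarith
  have "cut \<ge> int (e w0 u0)" unfolding cut_def
  proof -
    have "int (e w0 u0) \<le> (\<Sum>u\<in>W-M. int (e w0 u))"
      using w0 fin by (intro member_le_sum) auto
    also have "\<dots> \<le> (\<Sum>w\<in>M. \<Sum>u\<in>W-M. int (e w u))"
      using w0 fM by (intro member_le_sum[where f="\<lambda>w. \<Sum>u\<in>W-M. int (e w u)"]) (auto intro: sum_nonneg)
    finally show "int (e w0 u0) \<le> (\<Sum>w\<in>M. \<Sum>u\<in>W-M. int (e w u))" .
  qed
  then have c2: "cut = 1" using c1 w0 by linarith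
  have "(\<Sum>w\<in>M. int (vdeg W e w)) = 2 * int (card M)"
    using deg2 MW by (simp add: subset_iff)
  then have "even cut" using E2_vdeg[OF fin MW, of e] E2_even[OF fM sy ll] unfolding cut_def
    by (metis dvd_add_right_iff dvd_triv_left)
  then show False using c2 by simp
qed

definition gdist :: "'a set \<Rightarrow> ('a \<Rightarrow> 'a \<Rightarrow> nat) \<Rightarrow> 'a \<Rightarrow> 'a \<Rightarrow> nat" where
  "gdist W e q w = (LEAST k. (adj_in W e ^^ k) q w)"

lemma gdist_path:
  assumes "connected_on W e" "q \<in> W" "w \<in> W"
  shows "(adj_in W e ^^ gdist W e q w) q w"
proof -
  have "(adj_in W e)\<^sup>*\<^sup>* q w" using assms unfolding connected_on_def by blast
  then obtain n where "(adj_in W e ^^ n) q w" using rtranclp_imp_relpowp by metis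
  then show ?thesis unfolding gdist_def by (rule LeastI)
qed

lemma gdist_q: "gdist W e q q = 0"
  unfolding gdist_def by (rule Least_eq_0) simp

lemma gdist_adj:
  assumes "connected_on W e" "q \<in> W" "w \<in> W" "u \<in> W" "e w u > 0"
  shows "gdist W e q u \<le> gdist W e q w + 1"
proof -
  have "(adj_in W e ^^ Suc (gdist W e q w)) q u"
    using gdist_path[OF assms(1-3)] assms(3-5) by (auto simp: adj_in_def)
  then show ?thesis unfolding gdist_def using Least_le by (metis Suc_eq_plus1)
qed

lemma gdist_parent:
  assumes "connected_on W e" "q \<in> W" "w \<in> W" "w \<noteq> q" "symm e"
  shows "\<exists>p\<in>W. e p w > 0 \<and> gdist W e q p + 1 = gdist W e q w"
proof -
  have P: "(adj_in W e ^^ gdist W e q w) q w" by (rule gdist_path[OF assms(1-3)])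
  have "gdist W e q w \<noteq> 0"
  proof
    assume "gdist W e q w = 0" then show False using P assms(4) by simp
  qed
  then obtain k where k: "gdist W e q w = Suc k" using not0_implies_Suc by blast
  then obtain p where p1: "(adj_in W e ^^ k) q p" and p2: "adj_in W e p w"
    using P by (metis relpowp_Suc_E)
  have pW: "p \<in> W" and epw: "e p w > 0" using p2 unfolding adj_in_def by auto
  have "gdist W e q p \<le> k" unfolding gdist_def using p1 by (rule Least_le)
  moreover have "e w p > 0" using epw assms(5) unfolding symm_def by metis
  then have "gdist W e q w \<le> gdist W e q p + 1" using gdist_adj[OF assms(1,2) pW assms(3)] epw by simp
  ultimately have "gdist W e q p + 1 = gdist W e q w" using k by simp
  then show ?thesis using pW epw by blast
qed

lemma sum_e_col:
  assumes "symm e" "w \<in> W" "vdeg W e w = 2"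
  shows "(\<Sum>u\<in>W. int (e u w)) = 2"
proof -
  have "(\<Sum>u\<in>W. int (e u w)) = int (\<Sum>u\<in>W. e w u)" using assms(1) unfolding symm_def by simp
  then show ?thesis using assms unfolding vdeg_def by simp
qed

lemma L1:
  assumes fin: "finite W" and sy: "symm e" and con: "connected_on W e" and qW: "q \<in> W"
    and deg2: "\<And>w. w \<in> W \<Longrightarrow> vdeg W e w = 2"
  shows "\<exists>x. \<forall>w\<in>W-{q}. 0 \<le> D w + lapf W e x w"
proof -
  define K where "K = (\<Sum>w\<in>W. \<bar>D w\<bar>)"
  define Bn where "Bn = int (Max (gdist W e q ` W))"
  define F where "F = (\<lambda>t::int. K * (t * (2 * Bn + 3) - t * t))"
  define x where "x = (\<lambda>w. F (int (gdist W e q w)))"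
  have K0: "K \<ge> 0" unfolding K_def by (simp add: sum_nonneg)
  have dB: "\<And>w. w \<in> W \<Longrightarrow> int (gdist W e q w) \<le> Bn" unfolding Bn_def using fin by simp
  have mono: "\<And>s t. 0 \<le> s \<Longrightarrow> s \<le> t \<Longrightarrow> t \<le> Bn + 1 \<Longrightarrow> F s \<le> F t"
  proof -
    fix s t :: int assume a: "0 \<le> s" "s \<le> t" "t \<le> Bn + 1"
    have "F t - F s = K * ((t - s) * (2 * Bn + 3 - t - s))" unfolding F_def by (simp add: algebra_simps)
    moreover have "(t - s) * (2 * Bn + 3 - t - s) \<ge> 0" using a by (intro mult_nonneg_nonneg) auto
    ultimately show "F s \<le> F t" using K0 by (metis diff_ge_0_iff_ge mult_nonneg_nonneg)
  qed
  show ?thesis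
  proof (intro exI ballI)
    fix w assume wW: "w \<in> W - {q}"
    then have wW': "w \<in> W" "w \<noteq> q" by auto
    obtain p where pW: "p \<in> W" and ep: "e p w > 0" and dp: "gdist W e q p + 1 = gdist W e q w"
      using gdist_parent[OF con qW wW' sy] by blast
    define d where "d = int (gdist W e q w)"
    have d1: "d \<ge> 1" using dp unfolding d_def by simp
    have dBn: "d \<le> Bn" unfolding d_def using dB wW' by simp
    define \<alpha> where "\<alpha> = F d - F (d - 1)"
    define \<beta> where "\<beta> = F d - F (d + 1)"
    have ab: "\<alpha> + \<beta> = 2 * K" unfolding \<alpha>_def \<beta>_def F_def by (simp add: algebra_simps)
    have ab2: "\<alpha> \<ge> \<beta>" unfolding \<alpha>_def \<beta>_def using mono[of "d - 1" "d + 1"] d1 dBn by simp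
    have "d - 1 = int (gdist W e q p)" unfolding d_def using dp by linarith
    then have xp: "x p = F (d - 1)" unfolding x_def by simp
    have xw: "x w = F d" unfolding x_def d_def by simp
    have tu: "\<And>u. u \<in> W \<Longrightarrow> int (e u w) * (x w - x u) - int (e u w) * \<beta> \<ge> 0"
    proof -
      fix u assume uW: "u \<in> W"
      show "int (e u w) * (x w - x u) - int (e u w) * \<beta> \<ge> 0"
      proof (cases "e u w = 0")
        case True then show ?thesis by simp
      next
        case False
        then have "e w u > 0" using sy unfolding symm_def by (metis gr0I)
        then have "gdist W e q u \<le> gdist W e q w + 1" using gdist_adj[OF con qW wW'(1) uW] by simp
        then have "F (int (gdist W e q u)) \<le> F (d + 1)" using mono[of "int (gdist W e q u)" "d + 1"] dBn
          unfolding d_def by simp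
        then have "x w - x u - \<beta> \<ge> 0" unfolding x_def \<beta>_def d_def by simp
        then have "int (e u w) * (x w - x u - \<beta>) \<ge> 0" by simp
        then show ?thesis by (simp add: algebra_simps)
      qed
    qed
    have "int (e p w) * (x w - x p) - int (e p w) * \<beta> = int (e p w) * (\<alpha> - \<beta>)"
      using xp xw unfolding \<alpha>_def by (simp add: algebra_simps)
    also have "\<dots> \<ge> \<alpha> - \<beta>"
    proof -
      have "int (e p w) \<ge> 1" using ep by simp
      then show ?thesis using ab2 by (metis mult_le_cancel_right1 diff_ge_0_iff_ge not_le mult.commute le_less_trans less_le_not_le)
    qed
    finally have tp: "int (e p w) * (x w - x p) - int (e p w) * \<beta> \<ge> \<alpha> - \<beta>" .
    have "\<alpha> - \<beta> \<le> (\<Sum>u\<in>W. int (e u w) * (x w - x u) - int (e u w) * \<beta>)"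
      using tp member_le_sum[of p W "\<lambda>u. int (e u w) * (x w - x u) - int (e u w) * \<beta>"] tu pW fin by fastforce
    also have "\<dots> = lapf W e x w - 2 * \<beta>"
      unfolding lapf_def using sum_e_col[OF sy wW'(1) deg2[OF wW'(1)]]
      by (simp add: sum_subtractf sum_distrib_right[symmetric])
    finally have "lapf W e x w \<ge> 2 * K" using ab by simp
    moreover have "\<bar>D w\<bar> \<le> K" unfolding K_def using fin wW' by (intro member_le_sum) auto
    ultimately show "0 \<le> D w + lapf W e x w" by simp
  qed
qed

lemma lower_bound:
  assumes fin: "finite W" and sy: "symm e" and con: "connected_on W e" and qW: "q \<in> W"
    and xq: "x q = 0" and E: "\<forall>w\<in>W-{q}. 0 \<le> D w + lapf W e x w"
  shows "\<forall>w\<in>W. x w \<ge> - (int (card W) * ((\<Sum>w\<in>W. \<bar>D w\<bar>) + 1))"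
proof -
  define K where "K = (\<Sum>w\<in>W. \<bar>D w\<bar>)"
  have K0: "K \<ge> 0" unfolding K_def by (simp add: sum_nonneg)
  define Mt where "Mt = (\<lambda>t. {w\<in>W. x w < t})"
  have MtW: "\<And>t. Mt t \<subseteq> W" unfolding Mt_def by auto
  have finM: "\<And>t. finite (Mt t)" using fin MtW finite_subset by blast
  have step: "\<And>t. t \<le> 0 \<Longrightarrow> Mt t \<noteq> {} \<Longrightarrow> Mt (t - (K+1)) \<subset> Mt t"
  proof -
    fix t :: int assume t0: "t \<le> 0" and ne: "Mt t \<noteq> {}"
    have sub: "Mt (t - (K+1)) \<subseteq> Mt t" unfolding Mt_def using K0 by auto
    show "Mt (t - (K+1)) \<subset> Mt t"
    proof (rule ccontr)
      assume "\<not> Mt (t - (K+1)) \<subset> Mt t"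
      then have eq: "Mt (t - (K+1)) = Mt t" using sub by blast
      define M where "M = Mt t"
      have MW: "M \<subseteq> W" unfolding M_def by (rule MtW)
      have fM: "finite M" unfolding M_def by (rule finM)
      have qM: "q \<notin> M" unfolding M_def Mt_def using xq t0 by auto
      obtain a where a: "a \<in> M" using ne unfolding M_def by blast
      obtain w0 u0 where w0: "w0 \<in> M" "u0 \<in> W - M" "e w0 u0 > 0"
        using crossing[OF con MW a qW qM] by blast
      have lowM: "\<And>w. w \<in> M \<Longrightarrow> x w < t - (K+1)" using eq unfolding M_def Mt_def by blast
      have highM: "\<And>u. u \<in> W - M \<Longrightarrow> x u \<ge> t" unfolding M_def Mt_def by auto
      have nn: "\<And>w u. w \<in> M \<Longrightarrow> u \<in> W - M \<Longrightarrow> int (e u w) * (x u - x w) \<ge> 0"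
        using lowM highM by (metis diff_ge_0_iff_ge less_le_trans linorder_not_le mult_nonneg_nonneg of_nat_0_le_iff less_imp_le K0 le_add_same_cancel1 zle_diff1_eq order.strict_trans2 diff_le_eq)
      have e0: "int (e u0 w0) \<ge> 1" using w0(3) sy unfolding symm_def by (metis int_one_le_iff_zero_less of_nat_0_less_iff)
      have "x u0 - x w0 \<ge> K + 2" using lowM[OF w0(1)] highM[OF w0(2)] by simp
      then have "int (e u0 w0) * (x u0 - x w0) \<ge> K + 2"
        using e0 K0 by (metis mult_le_cancel_right1 mult.commute order_trans le_add_same_cancel1 zero_le_numeral add_nonneg_nonneg mult_right_mono mult_1)
      also have "int (e u0 w0) * (x u0 - x w0) \<le> (\<Sum>u\<in>W-M. int (e u w0) * (x u - x w0))"
        using w0 fin nn by (intro member_le_sum) auto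
      also have "\<dots> \<le> (\<Sum>w\<in>M. \<Sum>u\<in>W-M. int (e u w) * (x u - x w))"
        using w0 fM nn fin by (intro member_le_sum[where f="\<lambda>w. \<Sum>u\<in>W-M. int (e u w) * (x u - x w)"] sum_nonneg) auto
      also have "\<dots> = - (\<Sum>w\<in>M. lapf W e x w)"
        unfolding cut_formula[OF fin sy MW] by (simp add: sum_negf[symmetric] algebra_simps)
      finally have c1: "(\<Sum>w\<in>M. lapf W e x w) \<le> -(K+2)" by simp
      have "0 \<le> (\<Sum>w\<in>M. D w + lapf W e x w)" using E MW qM by (intro sum_nonneg) auto
      then have c2: "(\<Sum>w\<in>M. lapf W e x w) \<ge> - (\<Sum>w\<in>M. D w)" by (simp add: sum.distrib)
      have "(\<Sum>w\<in>M. D w) \<le> (\<Sum>w\<in>M. \<bar>D w\<bar>)" by (intro sum_mono) auto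
      also have "\<dots> \<le> K" unfolding K_def using MW fin by (intro sum_mono2) auto
      finally show False using c1 c2 by simp
    qed
  qed
  have ind: "\<And>j. Mt (- (int j * (K+1))) = {} \<or> card (Mt (- (int j * (K+1)))) + j \<le> card W"
  proof -
    fix j show "Mt (- (int j * (K+1))) = {} \<or> card (Mt (- (int j * (K+1)))) + j \<le> card W"
    proof (induction j)
      case 0 then show ?case using card_mono[OF fin MtW] by simp
    next
      case (Suc j)
      define t where "t = - (int j * (K+1))"
      have tt: "- (int (Suc j) * (K+1)) = t - (K+1)" unfolding t_def by (simp add: algebra_simps)
      show ?case
      proof (cases "Mt t = {}")
        case True
        have "Mt (t - (K+1)) \<subseteq> Mt t" unfolding Mt_def using K0 by auto
        then show ?thesis using True tt by auto
      next
        case False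
        have t0: "t \<le> 0" unfolding t_def using K0 by simp
        have "Mt (t - (K+1)) \<subset> Mt t" using step[OF t0 False] .
        then have "card (Mt (t - (K+1))) < card (Mt t)" using finM psubset_card_mono by blast
        then show ?thesis using Suc.IH False tt unfolding t_def by auto
      qed
    qed
  qed
  have "Mt (- (int (card W) * (K+1))) = {}"
    using ind[of "card W"] finM by (metis add_le_same_cancel2 card_0_eq le_zero_eq)
  then show ?thesis unfolding Mt_def K_def by auto
qed

lemma lapf_ind:
  assumes "w \<in> W" "finite W"
  shows "lapf W e (\<lambda>u. if u \<in> S then 1 else 0) w =
    (if w \<in> S then (\<Sum>u\<in>W-S. int (e u w)) else - (\<Sum>u\<in>W\<inter>S. int (e u w)))"
proof (cases "w \<in> S")
  case True
  have "lapf W e (\<lambda>u. if u \<in> S then 1 else 0) w = (\<Sum>u\<in>W. if u \<in> S then 0 else int (e u w))"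
    unfolding lapf_def using True by (intro sum.cong) auto
  also have "\<dots> = (\<Sum>u\<in>W-S. int (e u w))"
    using assms(2) by (simp add: sum.If_cases Diff_eq)
  finally show ?thesis using True by simp
next
  case False
  have "lapf W e (\<lambda>u. if u \<in> S then 1 else 0) w = (\<Sum>u\<in>W. if u \<in> S then - int (e u w) else 0)"
    unfolding lapf_def using False by (intro sum.cong) auto
  also have "\<dots> = - (\<Sum>u\<in>W\<inter>S. int (e u w))"
    using assms(2) by (simp add: sum.If_cases sum_negf)
  finally show ?thesis using False by simp
qed

lemma reduced_exists:
  assumes fin: "finite W" and sy: "symm e" and con: "connected_on W e" and qW: "q \<in> W"
    and deg2: "\<And>w. w \<in> W \<Longrightarrow> vdeg W e w = 2"
  shows "\<exists>D'. princ W e (\<lambda>w. D' w - D w) \<and> (\<forall>w\<in>W-{q}. D' w \<ge> 0) \<and>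
           (\<forall>S. S \<subseteq> W-{q} \<longrightarrow> S \<noteq> {} \<longrightarrow> (\<exists>w\<in>S. D' w < (\<Sum>u\<in>W-S. int (e u w))))"
proof -
  define K where "K = (\<Sum>w\<in>W. \<bar>D w\<bar>)"
  define L where "L = int (card W) * (int (card W) * (K + 1))"
  define E where "E = (\<lambda>x. x q = 0 \<and> (\<forall>w\<in>W-{q}. 0 \<le> D w + lapf W e x w))"
  obtain x0 where x0: "\<forall>w\<in>W-{q}. 0 \<le> D w + lapf W e x0 w" using L1[OF fin sy con qW deg2] by blast
  define x1 where "x1 = (\<lambda>u. x0 u + (- x0 q))"
  have "\<forall>w. lapf W e x1 w = lapf W e x0 w" unfolding x1_def by (intro allI lapf_shift)
  then have "E x1" unfolding E_def using x0 by (simp add: x1_def)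
  have sumlow: "\<And>x. E x \<Longrightarrow> (\<Sum>w\<in>W. x w) \<ge> - L"
  proof -
    fix x assume Ex: "E x"
    have lb: "\<forall>w\<in>W. x w \<ge> - (int (card W) * (K + 1))"
      using lower_bound[OF fin sy con qW] Ex unfolding E_def K_def by blast
    have "(\<Sum>w\<in>W. - (int (card W) * (K + 1))) \<le> (\<Sum>w\<in>W. x w)" using lb by (intro sum_mono) auto
    then show "(\<Sum>w\<in>W. x w) \<ge> - L" unfolding L_def by simp
  qed
  obtain x where Ex: "E x" and xmin: "\<forall>y. E y \<longrightarrow> nat ((\<Sum>w\<in>W. x w) + L) \<le> nat ((\<Sum>w\<in>W. y w) + L)"
    using ex_has_least_nat[of E x1 "\<lambda>x. nat ((\<Sum>w\<in>W. x w) + L)"] \<open>E x1\<close> by blast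
  have xmin': "\<And>y. E y \<Longrightarrow> (\<Sum>w\<in>W. x w) \<le> (\<Sum>w\<in>W. y w)"
  proof -
    fix y assume "E y"
    then show "(\<Sum>w\<in>W. x w) \<le> (\<Sum>w\<in>W. y w)" using xmin sumlow[OF Ex] sumlow[of y] by force
  qed
  define D' where "D' = (\<lambda>w. D w + lapf W e x w)"
  have pr: "princ W e (\<lambda>w. D' w - D w)" unfolding princ_def D'_def by auto
  have nn: "\<forall>w\<in>W-{q}. D' w \<ge> 0" using Ex unfolding E_def D'_def by blast
  have red: "\<forall>S. S \<subseteq> W-{q} \<longrightarrow> S \<noteq> {} \<longrightarrow> (\<exists>w\<in>S. D' w < (\<Sum>u\<in>W-S. int (e u w)))"
  proof (intro allI impI, rule ccontr)
    fix S assume SW: "S \<subseteq> W - {q}" and Sne: "S \<noteq> {}" and nr: "\<not> (\<exists>w\<in>S. D' w < (\<Sum>u\<in>W-S. int (e u w)))"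
    define ind where "ind = (\<lambda>u. if u \<in> S then 1 else (0::int))"
    define y where "y = (\<lambda>u. x u - ind u)"
    have "E y"
      unfolding E_def
    proof
      show "y q = 0" using Ex SW unfolding E_def y_def ind_def by auto
      show "\<forall>w\<in>W - {q}. 0 \<le> D w + lapf W e y w"
      proof
        fix w assume wW: "w \<in> W - {q}"
        have "lapf W e y w = lapf W e x w - lapf W e ind w" unfolding y_def by (rule lapf_diff)
        moreover have "lapf W e ind w = (if w \<in> S then (\<Sum>u\<in>W-S. int (e u w)) else - (\<Sum>u\<in>W\<inter>S. int (e u w)))"
          unfolding ind_def using wW fin by (intro lapf_ind) auto
        moreover have "(\<Sum>u\<in>W\<inter>S. int (e u w)) \<ge> 0" by (simp add: sum_nonneg)
        ultimately show "0 \<le> D w + lapf W e y w"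
        proof (cases "w \<in> S")
          case True
          then have "\<not> D' w < (\<Sum>u\<in>W-S. int (e u w))" using nr by blast
          then show ?thesis using \<open>lapf W e y w = lapf W e x w - lapf W e ind w\<close>
            \<open>lapf W e ind w = _\<close> True unfolding D'_def by simp
        next
          case False
          have "D' w \<ge> 0" using nn wW by blast
          then show ?thesis using \<open>lapf W e y w = lapf W e x w - lapf W e ind w\<close>
            \<open>lapf W e ind w = _\<close> \<open>(\<Sum>u\<in>W\<inter>S. int (e u w)) \<ge> 0\<close> False unfolding D'_def by simp
        qed
      qed
    qed
    have finS: "finite S" using SW fin finite_subset by blast
    have "(\<Sum>w\<in>W. y w) = (\<Sum>w\<in>W. x w) - (\<Sum>w\<in>W. ind w)" unfolding y_def by (simp add: sum_subtractf)
    moreover have "(\<Sum>w\<in>W. ind w) = int (card S)"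
    proof -
      have "W \<inter> S = S" using SW by blast
      then show ?thesis unfolding ind_def using fin by (simp add: sum.If_cases)
    qed
    moreover have "card S > 0" using finS Sne by (simp add: card_gt_0_iff)
    ultimately have "(\<Sum>w\<in>W. y w) < (\<Sum>w\<in>W. x w)" by simp
    then show False using xmin'[OF \<open>E y\<close>] by simp
  qed
  show ?thesis using pr nn red by blast
qed

lemma burning:
  assumes fin: "finite W" and sy: "symm e" and ll: "\<forall>u. e u u = 0" and qW: "q \<in> W"
    and deg2: "\<And>w. w \<in> W \<Longrightarrow> vdeg W e w = 2"
    and red: "\<forall>S. S \<subseteq> W-{q} \<longrightarrow> S \<noteq> {} \<longrightarrow> (\<exists>w\<in>S. D' w < (\<Sum>u\<in>W-S. int (e u w)))"
  shows "(\<Sum>w\<in>W-{q}. D' w) \<le> 1"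
proof -
  define P where "P = (\<lambda>B. q \<in> B \<and> B \<subseteq> W \<and>
     2 * (\<Sum>w\<in>B-{q}. D' w) + 2 * (int (card B) - 1) \<le> E2 e B)"
  have P0: "P {q}" unfolding P_def E2_def using qW ll by simp
  have bound: "\<forall>B. P B \<longrightarrow> card B < card W + 1"
  proof (intro allI impI)
    fix B assume "P B"
    then have "B \<subseteq> W" unfolding P_def by blast
    then have "card B \<le> card W" using fin by (rule card_mono[rotated])
    then show "card B < card W + 1" by simp
  qed
  obtain B where PB: "P B" and Bmax: "\<forall>B'. P B' \<longrightarrow> card B' \<le> card B"
    using Lattices_Big.ex_has_greatest_nat[OF P0 bound] by blast
  have "B = W"
  proof (rule ccontr)
    assume ne: "B \<noteq> W"
    have BW: "B \<subseteq> W" and qB: "q \<in> B" using PB unfolding P_def by auto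
    have finB: "finite B" using BW fin finite_subset by blast
    define S where "S = W - B"
    have SW: "S \<subseteq> W - {q}" unfolding S_def using qB by auto
    have Sne: "S \<noteq> {}" unfolding S_def using ne BW by auto
    obtain w where wS: "w \<in> S" and wlt: "D' w < (\<Sum>u\<in>W-S. int (e u w))" using red SW Sne by blast
    have WS: "W - S = B" unfolding S_def using BW by auto
    have wB: "w \<notin> B" "w \<in> W" "w \<noteq> q" using wS qB unfolding S_def by auto
    have "P (insert w B)"
    proof -
      have "E2 e (insert w B) = E2 e B + 2 * (\<Sum>b\<in>B. int (e b w))"
        using E2_insert[OF finB wB(1) sy] ll by simp
      moreover have "(\<Sum>v\<in>insert w B - {q}. D' v) = (\<Sum>v\<in>B-{q}. D' v) + D' w"
      proof -
        have "insert w B - {q} = insert w (B - {q})" using wB by auto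
        then show ?thesis using finB wB by simp
      qed
      moreover have "card (insert w B) = card B + 1" using finB wB by simp
      moreover have "2 * (\<Sum>w\<in>B-{q}. D' w) + 2 * (int (card B) - 1) \<le> E2 e B" using PB unfolding P_def by blast
      moreover have "D' w + 1 \<le> (\<Sum>b\<in>B. int (e b w))" using wlt WS by simp
      ultimately have "2 * (\<Sum>v\<in>insert w B - {q}. D' v) + 2 * (int (card (insert w B)) - 1) \<le> E2 e (insert w B)"
        by simp
      then show ?thesis unfolding P_def using qB BW wB by blast
    qed
    then have "card (insert w B) \<le> card B" using Bmax by blast
    then show False using finB wB by simp
  qed
  then have PW: "2 * (\<Sum>w\<in>W-{q}. D' w) + 2 * (int (card W) - 1) \<le> E2 e W" using PB unfolding P_def by simp
  have "E2 e W = (\<Sum>w\<in>W. int (vdeg W e w))" unfolding E2_def vdeg_def by simp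
  also have "\<dots> = 2 * int (card W)" using deg2 by simp
  finally show ?thesis using PW by simp
qed

lemma cycle_deg_Leff:
  assumes cyc: "is_cycle W e" and dg: "div_deg W D \<ge> 1"
  shows "L_effective W e D"
proof -
  have fin: "finite W" and sy: "symm e" and ll: "\<forall>u. e u u = 0" and con: "connected_on W e"
    and deg2: "\<And>w. w \<in> W \<Longrightarrow> vdeg W e w = 2"
    using cyc unfolding is_cycle_def graph_def symm_def by auto
  obtain q where qW: "q \<in> W" using con unfolding connected_on_def by blast
  obtain D' where pr: "princ W e (\<lambda>w. D' w - D w)" and nn: "\<forall>w\<in>W-{q}. D' w \<ge> 0"
    and red: "\<forall>S. S \<subseteq> W-{q} \<longrightarrow> S \<noteq> {} \<longrightarrow> (\<exists>w\<in>S. D' w < (\<Sum>u\<in>W-S. int (e u w)))"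
    using reduced_exists[OF fin sy con qW deg2] by blast
  have b: "(\<Sum>w\<in>W-{q}. D' w) \<le> 1" using burning[OF fin sy ll qW deg2 red] .
  have "(\<Sum>w\<in>W. D' w - D w) = 0" using princ_deg[OF fin sy pr] .
  then have "(\<Sum>w\<in>W. D' w) = (\<Sum>w\<in>W. D w)" by (simp add: sum_subtractf)
  moreover have "(\<Sum>w\<in>W. D' w) = D' q + (\<Sum>w\<in>W-{q}. D' w)" using fin qW by (simp add: sum.remove)
  ultimately have "D' q \<ge> 0" using dg b unfolding div_deg_def by simp
  then have "effective W D'" using nn unfolding effective_def by auto
  then show ?thesis using L_eff_iff[OF fin sy ll] pr by blast
qed

definition Pk :: "'a set \<Rightarrow> ('a \<Rightarrow> 'a \<Rightarrow> nat) \<Rightarrow> ('a \<Rightarrow> int) \<Rightarrow> nat \<Rightarrow> bool" where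
  "Pk W e f k \<longleftrightarrow> (\<forall>lam. effective W lam \<and> div_deg W lam = int k \<longrightarrow> L_effective W e (\<lambda>u. f u - lam u))"

lemma L_eff_cong:
  assumes "finite W" "symm e" "\<forall>u. e u u = 0" "\<And>w. w \<in> W \<Longrightarrow> f w = g w" "L_effective W e f"
  shows "L_effective W e g"
proof -
  obtain h where "effective W h" "princ W e (\<lambda>w. h w - f w)" using assms L_eff_iff by blast
  moreover have "princ W e (\<lambda>w. h w - g w)" using calculation(2) by (rule princ_cong) (simp add: assms(4))
  ultimately show ?thesis using L_eff_iff[OF assms(1-3)] by blast
qed

lemma L_eff_add:
  assumes "finite W" "symm e" "\<forall>u. e u u = 0" "L_effective W e f" "effective W h"
  shows "L_effective W e (\<lambda>u. f u + h u)"
proof -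
  obtain g where g: "effective W g" "princ W e (\<lambda>w. g w - f w)" using assms L_eff_iff by blast
  have "effective W (\<lambda>u. g u + h u)" using g(1) assms(5) unfolding effective_def by auto
  moreover have "princ W e (\<lambda>w. (g w + h w) - (f w + h w))" using g(2) by simp
  ultimately show ?thesis using L_eff_iff[OF assms(1-3)] by blast
qed

lemma eff_deg0:
  assumes "finite W" "effective W g" "div_deg W g = 0" "w \<in> W"
  shows "g w = 0"
proof -
  have "\<forall>w\<in>W. g w = 0" using assms sum_nonneg_eq_0_iff[of W g] unfolding effective_def div_deg_def by blast
  then show ?thesis using assms by blast
qed

lemma L_eff_deg:
  assumes "finite W" "symm e" "\<forall>u. e u u = 0" "L_effective W e f"
  shows "div_deg W f \<ge> 0"
proof -
  obtain g where g: "effective W g" "princ W e (\<lambda>w. g w - f w)" using assms L_eff_iff by blast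
  have "(\<Sum>w\<in>W. g w - f w) = 0" using princ_deg[OF assms(1,2) g(2)] .
  then have "div_deg W f = (\<Sum>w\<in>W. g w)" unfolding div_deg_def by (simp add: sum_subtractf)
  also have "\<dots> \<ge> 0" using g(1) unfolding effective_def by (simp add: sum_nonneg)
  finally show ?thesis by simp
qed

lemma rank_char:
  assumes fin: "finite W" and ne: "W \<noteq> {}" and sy: "symm e" and ll: "\<forall>u. e u u = 0"
  shows "int k \<le> div_rank W e f \<longleftrightarrow> Pk W e f k"
proof -
  obtain w0 where w0: "w0 \<in> W" using ne by blast
  have P0: "Pk W e f 0 \<longleftrightarrow> L_effective W e f"
  proof
    assume "Pk W e f 0"
    then have "L_effective W e (\<lambda>u. f u - (\<lambda>_. 0) u)" unfolding Pk_def
      by (elim allE[of _ "\<lambda>_. 0"]) (simp add: effective_def div_deg_def)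
    then show "L_effective W e f" by simp
  next
    assume L: "L_effective W e f"
    show "Pk W e f 0" unfolding Pk_def
    proof (intro allI impI)
      fix lam assume "effective W lam \<and> div_deg W lam = int 0"
      then have "\<And>w. w \<in> W \<Longrightarrow> lam w = 0" using eff_deg0[OF fin] by auto
      then show "L_effective W e (\<lambda>u. f u - lam u)" using L_eff_cong[OF fin sy ll _ L] by simp
    qed
  qed
  have down: "\<And>k. Pk W e f (Suc k) \<Longrightarrow> Pk W e f k"
  proof -
    fix k assume PS: "Pk W e f (Suc k)"
    show "Pk W e f k" unfolding Pk_def
    proof (intro allI impI)
      fix lam assume lam: "effective W lam \<and> div_deg W lam = int k"
      define lam' where "lam' = (\<lambda>u. lam u + eps w0 u)"
      have "effective W lam'" using lam unfolding lam'_def effective_def eps_def by auto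
      moreover have "div_deg W lam' = int (Suc k)"
        using lam fin w0 unfolding lam'_def div_deg_def eps_def by (simp add: sum.distrib)
      ultimately have "L_effective W e (\<lambda>u. f u - lam' u)" using PS unfolding Pk_def by blast
      then have "L_effective W e (\<lambda>u. (f u - lam' u) + eps w0 u)"
        by (rule L_eff_add[OF fin sy ll]) (simp add: effective_def eps_def)
      then show "L_effective W e (\<lambda>u. f u - lam u)" unfolding lam'_def by simp
    qed
  qed
  have downk: "\<And>k j. Pk W e f k \<Longrightarrow> j \<le> k \<Longrightarrow> Pk W e f j"
  proof -
    fix k j show "Pk W e f k \<Longrightarrow> j \<le> k \<Longrightarrow> Pk W e f j"
    proof (induction k)
      case 0 then show ?case by simp
    next
      case (Suc k) then show ?case using down le_Suc_eq by blast
    qed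
  qed
  have bnd: "\<And>k. Pk W e f k \<Longrightarrow> k \<le> nat (div_deg W f)"
  proof -
    fix k assume Pk: "Pk W e f k"
    define lam where "lam = (\<lambda>u. int k * eps w0 u)"
    have "effective W lam" unfolding lam_def effective_def eps_def by auto
    moreover have "div_deg W lam = int k" unfolding lam_def div_deg_def eps_def
    proof -
      have "(\<Sum>u\<in>W. int k * (if u = w0 then 1 else 0)) = (\<Sum>u\<in>W. if u = w0 then int k else 0)"
        by (intro sum.cong) auto
      then show "(\<Sum>u\<in>W. int k * (if u = w0 then 1 else 0)) = int k" using fin w0 by simp
    qed
    ultimately have L: "L_effective W e (\<lambda>u. f u - lam u)" using Pk unfolding Pk_def by blast
    have "div_deg W (\<lambda>u. f u - lam u) = div_deg W f - int k"
      using \<open>div_deg W lam = int k\<close> unfolding div_deg_def by (simp add: sum_subtractf)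
    then show "k \<le> nat (div_deg W f)" using L_eff_deg[OF fin sy ll L] by simp
  qed
  show ?thesis
  proof (cases "L_effective W e f")
    case False
    then have "div_rank W e f = -1" unfolding div_rank_def by simp
    moreover have "\<not> Pk W e f k" using False P0 downk by blast
    ultimately show ?thesis by simp
  next
    case True
    have eq: "div_rank W e f = int (GREATEST r. Pk W e f r)" unfolding div_rank_def Pk_def using True by simp
    have P0': "Pk W e f 0" using P0 True by simp
    have G: "Pk W e f (GREATEST r. Pk W e f r)" using GreatestI_nat[of "Pk W e f" 0, OF P0' bnd] by blast
    show ?thesis
    proof
      assume "int k \<le> div_rank W e f"
      then have "k \<le> (GREATEST r. Pk W e f r)" using eq by simp
      then show "Pk W e f k" using downk G by blast
    next
      assume "Pk W e f k"
      then have "k \<le> (GREATEST r. Pk W e f r)" using Greatest_le_nat[of "Pk W e f" k, OF _ bnd] by blast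
      then show "int k \<le> div_rank W e f" using eq by simp
    qed
  qed
qed

lemma rank_ge: "div_rank W e f \<ge> -1"
  unfolding div_rank_def by simp

locale dec =
  fixes V V1 U :: "'a set" and e :: "'a \<Rightarrow> 'a \<Rightarrow> nat" and v :: 'a
  assumes finV: "finite V" and sy: "symm e" and ll: "\<forall>u. e u u = 0"
    and VU: "V = V1 \<union> U" and VI: "V1 \<inter> U = {v}"
    and zr: "\<forall>a\<in>V1-{v}. \<forall>b\<in>U-{v}. e a b = 0"
begin

lemma finV1: "finite V1" using finV VU by simp
lemma finU: "finite U" using finV VU by simp
lemma vV1: "v \<in> V1" using VI by auto
lemma vU: "v \<in> U" using VI by auto
lemma zr': "a \<in> V1-{v} \<Longrightarrow> b \<in> U-{v} \<Longrightarrow> e b a = 0"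
  using zr sy unfolding symm_def by metis

lemma inV1U: "u \<in> V1 \<Longrightarrow> u \<in> U \<Longrightarrow> u = v" using VI by blast

lemma lapf_split:
  "lapf V e x w = lapf V1 e x w + lapf U e x w - int (e v w) * (x w - x v)"
proof -
  have "lapf V e x w + (\<Sum>u\<in>V1\<inter>U. int (e u w) * (x w - x u)) = lapf V1 e x w + lapf U e x w"
    unfolding lapf_def VU using finV1 finU by (rule sum.union_inter)
  then show ?thesis using VI by simp
qed

lemma lapf_U_other:
  assumes "w \<in> V1 - {v}"
  shows "lapf U e x w = int (e v w) * (x w - x v)"
proof -
  have "lapf U e x w = int (e v w) * (x w - x v) + (\<Sum>u\<in>U-{v}. int (e u w) * (x w - x u))"
    unfolding lapf_def using finU vU by (simp add: sum.remove)
  moreover have "(\<Sum>u\<in>U-{v}. int (e u w) * (x w - x u)) = 0"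
    using zr' assms by (intro sum.neutral) auto
  ultimately show ?thesis by simp
qed

lemma lapf_V1_other:
  assumes "w \<in> U - {v}"
  shows "lapf V1 e x w = int (e v w) * (x w - x v)"
proof -
  have "lapf V1 e x w = int (e v w) * (x w - x v) + (\<Sum>u\<in>V1-{v}. int (e u w) * (x w - x u))"
    unfolding lapf_def using finV1 vV1 by (simp add: sum.remove)
  moreover have "(\<Sum>u\<in>V1-{v}. int (e u w) * (x w - x u)) = 0"
    using zr assms by (intro sum.neutral) auto
  ultimately show ?thesis by simp
qed

lemma lapf_V1: "w \<in> V1 - {v} \<Longrightarrow> lapf V e x w = lapf V1 e x w"
  using lapf_split lapf_U_other by simp
lemma lapf_U: "w \<in> U - {v} \<Longrightarrow> lapf V e x w = lapf U e x w"
  using lapf_split lapf_V1_other by simp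
lemma lapf_v: "lapf V e x v = lapf V1 e x v + lapf U e x v"
  using lapf_split ll by simp

lemma sumU_split: "(\<Sum>w\<in>U. g w) = g v + (\<Sum>w\<in>U-{v}. g w)"
  using finU vU by (simp add: sum.remove)

lemma princ_dec:
  "princ V e B \<longleftrightarrow> princ V1 e (contract_div U v B) \<and> princ U e (zero_div U v B)"
proof
  assume "princ V e B"
  then obtain x where x: "\<forall>w\<in>V. B w = lapf V e x w" unfolding princ_def by blast
  have s0: "(\<Sum>w\<in>U. lapf U e x w) = 0" using lapf_sum_zero[OF finU sy] .
  have sU: "(\<Sum>w\<in>U-{v}. B w) = (\<Sum>w\<in>U-{v}. lapf U e x w)"
    using x lapf_U VU by (intro sum.cong) auto
  have "princ V1 e (contract_div U v B)" unfolding princ_def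
  proof (intro exI[of _ x] ballI)
    fix w assume w: "w \<in> V1"
    show "contract_div U v B w = lapf V1 e x w"
    proof (cases "w = v")
      case True
      have "contract_div U v B w = B v + (\<Sum>w\<in>U-{v}. B w)" using True sumU_split unfolding contract_div_def by simp
      also have "\<dots> = lapf V1 e x v + lapf U e x v + (\<Sum>w\<in>U-{v}. lapf U e x w)"
        using x lapf_v sU VU vU by simp
      also have "\<dots> = lapf V1 e x v" using s0 sumU_split[of "lapf U e x"] by simp
      finally show ?thesis using True by simp
    next
      case False
      then show ?thesis using x lapf_V1 w VU unfolding contract_div_def by simp
    qed
  qed
  moreover have "princ U e (zero_div U v B)" unfolding princ_def
  proof (intro exI[of _ x] ballI)
    fix w assume w: "w \<in> U"
    show "zero_div U v B w = lapf U e x w"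
    proof (cases "w = v")
      case True
      then show ?thesis using sU s0 sumU_split[of "lapf U e x"] unfolding zero_div_def by simp
    next
      case False
      then show ?thesis using x lapf_U w VU unfolding zero_div_def by simp
    qed
  qed
  ultimately show "princ V1 e (contract_div U v B) \<and> princ U e (zero_div U v B)" ..
next
  assume "princ V1 e (contract_div U v B) \<and> princ U e (zero_div U v B)"
  then obtain x1 x2 where x1: "\<forall>w\<in>V1. contract_div U v B w = lapf V1 e x1 w"
    and x2: "\<forall>w\<in>U. zero_div U v B w = lapf U e x2 w" unfolding princ_def by blast
  define y where "y = (\<lambda>w. if w \<in> U then x2 w + (x1 v - x2 v) else x1 w)"
  have yU: "\<And>w. w \<in> U \<Longrightarrow> lapf U e y w = lapf U e x2 w"
  proof -
    fix w assume wU: "w \<in> U"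
    have "lapf U e y w = lapf U e (\<lambda>u. x2 u + (x1 v - x2 v)) w"
      by (rule lapf_cong[OF _ wU]) (simp add: y_def)
    then show "lapf U e y w = lapf U e x2 w" by (simp only: lapf_shift)
  qed
  have yV1: "\<And>w. w \<in> V1 \<Longrightarrow> lapf V1 e y w = lapf V1 e x1 w"
  proof -
    fix w assume "w \<in> V1"
    show "lapf V1 e y w = lapf V1 e x1 w"
      by (rule lapf_cong[OF _ \<open>w \<in> V1\<close>]) (use VI in \<open>auto simp: y_def dest: inV1U\<close>)
  qed
  show "princ V e B" unfolding princ_def
  proof (intro exI[of _ y] ballI)
    fix w assume w: "w \<in> V"
    consider "w = v" | "w \<in> V1 - {v}" | "w \<in> U - {v}" using w VU by blast
    then show "B w = lapf V e y w"
    proof cases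
      case 1
      have "contract_div U v B v = B v + (\<Sum>w\<in>U-{v}. B w)" using sumU_split unfolding contract_div_def by simp
      moreover have "zero_div U v B v = - (\<Sum>w\<in>U-{v}. B w)" unfolding zero_div_def by simp
      ultimately have "B v = contract_div U v B v + zero_div U v B v" by simp
      also have "\<dots> = lapf V1 e y v + lapf U e y v" using x1 x2 vV1 vU yU yV1 by simp
      finally show ?thesis using 1 lapf_v by simp
    next
      case 2
      then show ?thesis using x1 yV1 lapf_V1 unfolding contract_div_def by auto
    next
      case 3
      then show ?thesis using x2 yU lapf_U unfolding zero_div_def by auto
    qed
  qed
qed

lemma contract_diff: "contract_div U v (\<lambda>w. F w - E w) = (\<lambda>w. contract_div U v F w - contract_div U v E w)"
  unfolding contract_div_def by (auto simp: sum_subtractf)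
lemma zero_diff: "zero_div U v (\<lambda>w. F w - E w) = (\<lambda>w. zero_div U v F w - zero_div U v E w)"
  unfolding zero_div_def by (auto simp: sum_subtractf)

lemma Leff_dec:
  "L_effective V e E \<longleftrightarrow> (\<exists>F. effective V F \<and>
     princ V1 e (\<lambda>w. contract_div U v F w - contract_div U v E w) \<and>
     princ U e (\<lambda>w. zero_div U v F w - zero_div U v E w))"
  unfolding L_eff_iff[OF finV sy ll] princ_dec contract_diff zero_diff ..

end

lemma final_arith:
  fixes R r r2 :: int
  assumes "R \<ge> -1" "r \<ge> -1" "r2 \<ge> -1"
    and H: "\<And>k::nat. int k \<le> R \<longleftrightarrow> int k \<le> r \<and> (k \<ge> 1 \<longrightarrow> int (k - 1) \<le> r2)"
  shows "(r2 \<ge> r - 1 \<longrightarrow> R = r) \<and> (r2 = r - 2 \<longrightarrow> R = r - 1)"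
proof (intro conjI impI)
  assume a: "r2 \<ge> r - 1"
  have "R \<le> r"
  proof (cases "R \<ge> 0")
    case True then show ?thesis using H[of "nat R"] by simp
  next
    case False then show ?thesis using assms by simp
  qed
  moreover have "R \<ge> r"
  proof (cases "r \<ge> 0")
    case True then show ?thesis using H[of "nat r"] a by simp
  next
    case False then show ?thesis using assms by simp
  qed
  ultimately show "R = r" by simp
next
  assume a: "r2 = r - 2"
  then have r1: "r \<ge> 1" using assms by simp
  have "R \<ge> r - 1" using H[of "nat (r - 1)"] r1 a by auto
  moreover have "R \<le> r - 1"
  proof (rule ccontr)
    assume "\<not> R \<le> r - 1"
    then have "R \<ge> r" by simp
    then show False using H[of "nat R"] r1 a by auto
  qed
  ultimately show "R = r - 1" by simp
qed

locale dec2 = dec +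
  fixes f :: "'a \<Rightarrow> int"
  assumes cyc: "is_cycle U e" and gd: "good U e (zero_div U v f)"
begin

definition "D1 = contract_div U v f"
definition "D2 = (\<lambda>u. D1 u - 2 * eps v u)"

lemma fN_princ: "princ U e (\<lambda>w. - zero_div U v f w)"
proof -
  have d0: "div_deg U (zero_div U v f) = 0" and L: "L_effective U e (zero_div U v f)"
    using gd unfolding good_def by auto
  obtain g where g: "effective U g" "princ U e (\<lambda>w. g w - zero_div U v f w)"
    using L L_eff_iff[OF finU sy ll] by blast
  have "(\<Sum>w\<in>U. g w - zero_div U v f w) = 0" using princ_deg[OF finU sy g(2)] .
  then have "div_deg U g = 0" using d0 unfolding div_deg_def by (simp add: sum_subtractf)
  then have z: "\<And>w. w \<in> U \<Longrightarrow> g w = 0" using eff_deg0[OF finU g(1)] by blast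
  show ?thesis by (rule princ_cong[OF g(2)]) (simp add: z)
qed

lemma zero_deg: "(\<Sum>w\<in>U. zero_div U v g w) = 0"
proof -
  have "(\<Sum>w\<in>U. zero_div U v g w) = zero_div U v g v + (\<Sum>w\<in>U-{v}. zero_div U v g w)"
    by (rule sumU_split)
  also have "(\<Sum>w\<in>U-{v}. zero_div U v g w) = (\<Sum>w\<in>U-{v}. g w)"
    unfolding zero_div_def by (intro sum.cong) auto
  finally show ?thesis unfolding zero_div_def by simp
qed

lemma V_split: "(\<Sum>w\<in>V. g w) = (\<Sum>w\<in>V1. g w) + (\<Sum>w\<in>U-{v}. g w)"
proof -
  have "V = V1 \<union> (U - {v})" using VU vV1 by auto
  moreover have "V1 \<inter> (U - {v}) = {}" using VI by auto
  ultimately show ?thesis using finV1 finU by (simp add: sum.union_disjoint)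
qed

lemma contract_deg: "div_deg V1 (contract_div U v g) = div_deg V g"
proof -
  have "div_deg V1 (contract_div U v g) = contract_div U v g v + (\<Sum>w\<in>V1-{v}. contract_div U v g w)"
    unfolding div_deg_def using finV1 vV1 by (simp add: sum.remove)
  also have "(\<Sum>w\<in>V1-{v}. contract_div U v g w) = (\<Sum>w\<in>V1-{v}. g w)"
    unfolding contract_div_def by (intro sum.cong) auto
  also have "contract_div U v g v = g v + (\<Sum>w\<in>U-{v}. g w)" unfolding contract_div_def using sumU_split by simp
  also have "g v + (\<Sum>w\<in>U-{v}. g w) + (\<Sum>w\<in>V1-{v}. g w) = (\<Sum>w\<in>V1. g w) + (\<Sum>w\<in>U-{v}. g w)"
    using finV1 vV1 by (simp add: sum.remove)
  finally show ?thesis unfolding div_deg_def using V_split[of g] by simp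
qed

lemma V1_sub: "V1 \<subseteq> V" using VU by auto
lemma U_sub: "U \<subseteq> V" using VU by auto

lemma contract_eff: "effective V F \<Longrightarrow> effective V1 (contract_div U v F)"
  unfolding effective_def contract_div_def using V1_sub U_sub by (auto intro!: sum_nonneg)

end

context dec2 begin

lemma fwd1:
  assumes P: "Pk V e f k"
  shows "Pk V1 e D1 k"
  unfolding Pk_def
proof (intro allI impI)
  fix \<mu> assume mu: "effective V1 \<mu> \<and> div_deg V1 \<mu> = int k"
  define lam where "lam = (\<lambda>w. if w \<in> V1 then \<mu> w else 0)"
  have "effective V lam" using mu unfolding lam_def effective_def by auto
  moreover have "div_deg V lam = int k"
  proof -
    have "div_deg V lam = (\<Sum>w\<in>V1. lam w) + (\<Sum>w\<in>U-{v}. lam w)" unfolding div_deg_def by (rule V_split)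
    also have "(\<Sum>w\<in>U-{v}. lam w) = 0" unfolding lam_def using inV1U by (intro sum.neutral) auto
    also have "(\<Sum>w\<in>V1. lam w) = div_deg V1 \<mu>" unfolding lam_def div_deg_def by simp
    finally show ?thesis using mu by simp
  qed
  ultimately have "L_effective V e (\<lambda>u. f u - lam u)" using P unfolding Pk_def by blast
  then obtain F where F: "effective V F"
    and pr: "princ V1 e (\<lambda>w. contract_div U v F w - contract_div U v (\<lambda>u. f u - lam u) w)"
    unfolding Leff_dec by blast
  have lamU: "(\<Sum>w\<in>U. lam w) = \<mu> v"
  proof -
    have "(\<Sum>w\<in>U-{v}. lam w) = 0" unfolding lam_def using inV1U by (intro sum.neutral) auto
    then show ?thesis using sumU_split[of lam] vV1 unfolding lam_def by simp
  qed
  have "\<And>w. w \<in> V1 \<Longrightarrow> contract_div U v (\<lambda>u. f u - lam u) w = D1 w - \<mu> w"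
    unfolding D1_def contract_div_def using lamU by (auto simp: sum_subtractf lam_def)
  then have "princ V1 e (\<lambda>w. contract_div U v F w - (D1 w - \<mu> w))"
    by (intro princ_cong[OF pr]) simp
  moreover have "effective V1 (contract_div U v F)" using contract_eff[OF F] .
  ultimately show "L_effective V1 e (\<lambda>u. D1 u - \<mu> u)"
    using L_eff_iff[OF finV1 sy ll] by blast
qed

lemma exists_u0: "\<exists>u0. u0 \<in> U \<and> u0 \<noteq> v"
proof (rule ccontr)
  assume "\<not> (\<exists>u0. u0 \<in> U \<and> u0 \<noteq> v)"
  then have "U \<subseteq> {v}" by auto
  then have "card U \<le> 1" using card_mono[of "{v}" U] by simp
  then show False using cyc unfolding is_cycle_def by simp
qed

end

context dec2 begin

lemma fwd2:
  assumes P: "Pk V e f k" and k1: "k \<ge> 1"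
  shows "Pk V1 e D2 (k - 1)"
  unfolding Pk_def
proof (intro allI impI)
  fix \<mu> assume mu: "effective V1 \<mu> \<and> div_deg V1 \<mu> = int (k - 1)"
  obtain u0 where u0: "u0 \<in> U" "u0 \<noteq> v" using exists_u0 by blast
  have u0V1: "u0 \<notin> V1" using u0 inV1U by blast
  have u0V: "u0 \<in> V" using u0 U_sub by blast
  define lam0 where "lam0 = (\<lambda>w. if w \<in> V1 then \<mu> w else 0)"
  define lam where "lam = (\<lambda>w. lam0 w + eps u0 w)"
  have lam0U: "\<And>w. w \<in> U - {v} \<Longrightarrow> lam0 w = 0" unfolding lam0_def by (auto dest: inV1U)
  have "effective V lam" using mu unfolding lam_def lam0_def effective_def eps_def by auto
  moreover have "div_deg V lam = int k"
  proof -
    have "div_deg V lam0 = (\<Sum>w\<in>V1. lam0 w) + (\<Sum>w\<in>U-{v}. lam0 w)" unfolding div_deg_def by (rule V_split)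
    also have "(\<Sum>w\<in>U-{v}. lam0 w) = 0" using lam0U by (intro sum.neutral) auto
    also have "(\<Sum>w\<in>V1. lam0 w) = div_deg V1 \<mu>" unfolding lam0_def div_deg_def by simp
    finally have "div_deg V lam0 = int (k - 1)" using mu by simp
    moreover have "(\<Sum>w\<in>V. eps u0 w) = 1" unfolding eps_def using finV u0V by simp
    ultimately show ?thesis unfolding div_deg_def lam_def using k1 by (simp add: sum.distrib)
  qed
  ultimately have "L_effective V e (\<lambda>u. f u - lam u)" using P unfolding Pk_def by blast
  then obtain F where F: "effective V F"
    and pr1: "princ V1 e (\<lambda>w. contract_div U v F w - contract_div U v (\<lambda>u. f u - lam u) w)"
    and pr2: "princ U e (\<lambda>w. zero_div U v F w - zero_div U v (\<lambda>u. f u - lam u) w)"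
    unfolding Leff_dec by blast
  have s1: "(\<Sum>w\<in>U-{v}. lam w) = 1"
  proof -
    have "(\<Sum>w\<in>U-{v}. lam w) = (\<Sum>w\<in>U-{v}. eps u0 w)" unfolding lam_def using lam0U by (intro sum.cong) auto
    also have "\<dots> = 1" unfolding eps_def using finU u0 by simp
    finally show ?thesis .
  qed
  have lamv: "lam v = \<mu> v" unfolding lam_def lam0_def eps_def using vV1 u0 by simp
  have lamU: "(\<Sum>w\<in>U. lam w) = \<mu> v + 1" using sumU_split[of lam] s1 lamv by simp
  have mpos: "(\<Sum>w\<in>U. F w) \<ge> 1"
  proof (rule ccontr)
    assume "\<not> (\<Sum>w\<in>U. F w) \<ge> 1"
    moreover have "(\<Sum>w\<in>U. F w) \<ge> 0" using F U_sub unfolding effective_def by (auto intro: sum_nonneg)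
    ultimately have "div_deg U F = 0" unfolding div_deg_def by simp
    moreover have "effective U F" using F U_sub unfolding effective_def by auto
    ultimately have F0: "\<And>w. w \<in> U \<Longrightarrow> F w = 0" using eff_deg0[OF finU] by blast
    have z: "\<And>w. w \<in> U \<Longrightarrow> zero_div U v F w = 0"
    proof -
      fix w assume "w \<in> U"
      have "(\<Sum>w\<in>U-{v}. F w) = 0" using F0 by (intro sum.neutral) auto
      then show "zero_div U v F w = 0" unfolding zero_div_def using F0 \<open>w \<in> U\<close> by simp
    qed
    have zl: "\<And>w. w \<in> U \<Longrightarrow> zero_div U v (\<lambda>u. f u - lam u) w = zero_div U v f w - (eps u0 w - eps v w)"
    proof -
      fix w assume wU: "w \<in> U"
      show "zero_div U v (\<lambda>u. f u - lam u) w = zero_div U v f w - (eps u0 w - eps v w)"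
      proof (cases "w = v")
        case True
        then show ?thesis unfolding zero_div_def using s1 u0 by (simp add: sum_subtractf eps_def)
      next
        case False
        then have "lam w = eps u0 w" using lam0U wU unfolding lam_def by simp
        then show ?thesis unfolding zero_div_def using False by (simp add: eps_def)
      qed
    qed
    have "princ U e (\<lambda>w. (- zero_div U v f w + (eps u0 w - eps v w)) - (- zero_div U v f w))"
    proof (rule princ_diff)
      show "princ U e (\<lambda>w. - zero_div U v f w + (eps u0 w - eps v w))"
        by (rule princ_cong[OF pr2]) (simp add: z zl)
      show "princ U e (\<lambda>w. - zero_div U v f w)" by (rule fN_princ)
    qed
    then have "princ U e (\<lambda>w. eps u0 w - eps v w)" by simp
    then show False using cycle_inj[OF cyc u0(1) vU u0(2)] by blast
  qed
  define g where "g = (\<lambda>w. contract_div U v F w - eps v w)"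
  have "effective V1 g"
  proof -
    have "effective V1 (contract_div U v F)" using contract_eff[OF F] .
    then show ?thesis using mpos unfolding g_def effective_def contract_div_def eps_def by auto
  qed
  moreover have "princ V1 e (\<lambda>w. g w - (D2 w - \<mu> w))"
  proof (rule princ_cong[OF pr1])
    fix w assume wV1: "w \<in> V1"
    show "contract_div U v F w - contract_div U v (\<lambda>u. f u - lam u) w = g w - (D2 w - \<mu> w)"
    proof (cases "w = v")
      case True
      then show ?thesis unfolding g_def D2_def D1_def contract_div_def using lamU
        by (simp add: sum_subtractf eps_def)
    next
      case False
      have "lam w = \<mu> w" unfolding lam_def lam0_def eps_def using wV1 u0V1 by auto
      then show ?thesis unfolding g_def D2_def D1_def contract_div_def using False by (simp add: eps_def)
    qed
  qed
  ultimately show "L_effective V1 e (\<lambda>u. D2 u - \<mu> u)" using L_eff_iff[OF finV1 sy ll] by blast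
qed

end

context dec2 begin

lemma bwd:
  assumes P1: "Pk V1 e D1 k" and P2: "k \<ge> 1 \<longrightarrow> Pk V1 e D2 (k - 1)"
  shows "Pk V e f k"
  unfolding Pk_def
proof (intro allI impI)
  fix lam assume lam: "effective V lam \<and> div_deg V lam = int k"
  have lamnn: "\<And>w. w \<in> V \<Longrightarrow> lam w \<ge> 0" using lam unfolding effective_def by blast
  define a where "a = (\<Sum>w\<in>U-{v}. lam w)"
  have a0: "a \<ge> 0" unfolding a_def using lamnn U_sub by (auto intro: sum_nonneg)
  have degsplit: "int k = (\<Sum>w\<in>V1. lam w) + a" using lam V_split[of lam] unfolding a_def div_deg_def by simp
  have lamU: "(\<Sum>w\<in>U. lam w) = lam v + a" unfolding a_def by (rule sumU_split)
  show "L_effective V e (\<lambda>u. f u - lam u)"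
  proof (cases "a = 0")
    case True
    have nnU: "\<And>w. w \<in> U-{v} \<Longrightarrow> lam w \<ge> 0" using lamnn U_sub by blast
    have fU': "finite (U - {v})" using finU by simp
    have "(\<Sum>w\<in>U-{v}. lam w) = 0" using True unfolding a_def .
    then have "\<forall>w\<in>U-{v}. lam w = 0"
      using sum_nonneg_eq_0_iff[OF fU' nnU] by simp
    then have lam0: "\<And>w. w \<in> U - {v} \<Longrightarrow> lam w = 0" by blast
    have "effective V1 lam" using lamnn V1_sub unfolding effective_def by auto
    moreover have "div_deg V1 lam = int k" using degsplit True unfolding div_deg_def by simp
    ultimately have "L_effective V1 e (\<lambda>u. D1 u - lam u)" using P1 unfolding Pk_def by blast
    then obtain B where B: "effective V1 B" and prB: "princ V1 e (\<lambda>w. B w - (D1 w - lam w))"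
      unfolding L_eff_iff[OF finV1 sy ll] by blast
    define F where "F = (\<lambda>w. if w \<in> V1 then B w else 0)"
    have FU: "\<And>w. w \<in> U - {v} \<Longrightarrow> F w = 0" unfolding F_def by (auto dest: inV1U)
    have sFU: "(\<Sum>w\<in>U-{v}. F w) = 0" using FU by (intro sum.neutral) auto
    have "effective V F" using B unfolding F_def effective_def by auto
    moreover have "princ V1 e (\<lambda>w. contract_div U v F w - contract_div U v (\<lambda>u. f u - lam u) w)"
    proof (rule princ_cong[OF prB])
      fix w assume wV1: "w \<in> V1"
      show "B w - (D1 w - lam w) = contract_div U v F w - contract_div U v (\<lambda>u. f u - lam u) w"
      proof (cases "w = v")
        case True
        have "contract_div U v F v = B v" unfolding contract_div_def using sumU_split[of F] sFU vV1
          by (simp add: F_def)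
        moreover have "contract_div U v (\<lambda>u. f u - lam u) v = D1 v - lam v"
          unfolding contract_div_def D1_def using lamU \<open>a = 0\<close> by (simp add: sum_subtractf)
        ultimately show ?thesis using True by simp
      next
        case False
        then show ?thesis unfolding contract_div_def D1_def F_def using wV1 by simp
      qed
    qed
    moreover have "princ U e (\<lambda>w. zero_div U v F w - zero_div U v (\<lambda>u. f u - lam u) w)"
    proof (rule princ_cong[OF fN_princ])
      fix w assume wU: "w \<in> U"
      show "- zero_div U v f w = zero_div U v F w - zero_div U v (\<lambda>u. f u - lam u) w"
      proof (cases "w = v")
        case True
        then show ?thesis unfolding zero_div_def using sFU \<open>a = 0\<close> unfolding a_def
          by (simp add: sum_subtractf)
      next
        case False
        then show ?thesis unfolding zero_div_def using FU lam0 wU by simp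
      qed
    qed
    ultimately show ?thesis unfolding Leff_dec by blast
  next
    case False
    then have a1: "a \<ge> 1" using a0 by simp
    have "(\<Sum>w\<in>V1. lam w) \<ge> 0" using lamnn V1_sub by (auto intro: sum_nonneg)
    then have k1: "k \<ge> 1" using degsplit a1 by simp
    define \<mu> where "\<mu> = (\<lambda>w. contract_div U v lam w - eps v w)"
    have "effective V1 \<mu>"
      unfolding effective_def
    proof
      fix w assume wV1: "w \<in> V1"
      show "\<mu> w \<ge> 0"
      proof (cases "w = v")
        case True
        have "lam v \<ge> 0" using lamnn vU U_sub by blast
        then show ?thesis using True lamU a1 unfolding \<mu>_def contract_div_def eps_def by simp
      next
        case False
        have "lam w \<ge> 0" using lamnn wV1 V1_sub by blast
        then show ?thesis using False unfolding \<mu>_def contract_div_def eps_def by simp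
      qed
    qed
    moreover have "div_deg V1 \<mu> = int (k - 1)"
    proof -
      have "div_deg V1 \<mu> = div_deg V1 (contract_div U v lam) - (\<Sum>w\<in>V1. eps v w)"
        unfolding \<mu>_def div_deg_def by (simp add: sum_subtractf)
      also have "(\<Sum>w\<in>V1. eps v w) = 1" unfolding eps_def using finV1 vV1 by simp
      also have "div_deg V1 (contract_div U v lam) = int k" using contract_deg lam by simp
      finally show ?thesis using k1 by simp
    qed
    ultimately have "L_effective V1 e (\<lambda>u. D2 u - \<mu> u)" using P2 k1 unfolding Pk_def by blast
    then obtain B where B: "effective V1 B" and prB: "princ V1 e (\<lambda>w. B w - (D2 w - \<mu> w))"
      unfolding L_eff_iff[OF finV1 sy ll] by blast
    define c where "c = zero_div U v (\<lambda>u. f u - lam u)"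
    have "div_deg U (\<lambda>w. c w + eps v w) \<ge> 1"
    proof -
      have "(\<Sum>w\<in>U. c w) = 0" unfolding c_def by (rule zero_deg)
      moreover have "(\<Sum>w\<in>U. eps v w) = 1" unfolding eps_def using finU vU by simp
      ultimately show ?thesis unfolding div_deg_def by (simp add: sum.distrib)
    qed
    then have "L_effective U e (\<lambda>w. c w + eps v w)" by (rule cycle_deg_Leff[OF cyc])
    then obtain A where A: "effective U A" and prA: "princ U e (\<lambda>w. A w - (c w + eps v w))"
      unfolding L_eff_iff[OF finU sy ll] by blast
    have sA: "(\<Sum>w\<in>U. A w) = 1"
    proof -
      have "(\<Sum>w\<in>U. A w - (c w + eps v w)) = 0" using princ_deg[OF finU sy prA] .
      moreover have "(\<Sum>w\<in>U. c w) = 0" unfolding c_def by (rule zero_deg)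
      moreover have "(\<Sum>w\<in>U. eps v w) = 1" unfolding eps_def using finU vU by simp
      ultimately show ?thesis by (simp add: sum_subtractf sum.distrib)
    qed
    have sA': "A v + (\<Sum>w\<in>U-{v}. A w) = 1" using sA sumU_split[of A] by simp
    define F where "F = (\<lambda>w. if w \<in> V1 - {v} then B w else if w \<in> U - {v} then A w
                              else if w = v then B v + A v else 0)"
    have FU: "\<And>w. w \<in> U - {v} \<Longrightarrow> F w = A w" unfolding F_def by (auto dest: inV1U)
    have Fv: "F v = B v + A v" unfolding F_def by simp
    have sFU: "(\<Sum>w\<in>U-{v}. F w) = (\<Sum>w\<in>U-{v}. A w)" using FU by (intro sum.cong) auto
    have "effective V F"
      unfolding effective_def
    proof
      fix w assume "w \<in> V"
      then consider "w \<in> V1 - {v}" | "w \<in> U - {v}" | "w = v" using VU by blast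
      then show "F w \<ge> 0"
      proof cases
        case 1 then show ?thesis using B unfolding F_def effective_def by auto
      next
        case 2 then show ?thesis using A FU unfolding effective_def by auto
      next
        case 3 then show ?thesis using A B vU vV1 Fv unfolding effective_def by auto
      qed
    qed
    moreover have "princ V1 e (\<lambda>w. contract_div U v F w - contract_div U v (\<lambda>u. f u - lam u) w)"
    proof (rule princ_cong[OF prB])
      fix w assume wV1: "w \<in> V1"
      show "B w - (D2 w - \<mu> w) = contract_div U v F w - contract_div U v (\<lambda>u. f u - lam u) w"
      proof (cases "w = v")
        case True
        have "contract_div U v F v = B v + 1" unfolding contract_div_def
          using sumU_split[of F] sFU Fv sA' by simp
        moreover have "contract_div U v (\<lambda>u. f u - lam u) v = D1 v - contract_div U v lam v"
          unfolding contract_div_def D1_def by (simp add: sum_subtractf)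
        ultimately show ?thesis using True unfolding D2_def \<mu>_def by (simp add: eps_def)
      next
        case False
        then show ?thesis unfolding contract_div_def D2_def D1_def \<mu>_def F_def using wV1
          by (simp add: eps_def)
      qed
    qed
    moreover have "princ U e (\<lambda>w. zero_div U v F w - zero_div U v (\<lambda>u. f u - lam u) w)"
    proof (rule princ_cong[OF prA])
      fix w assume wU: "w \<in> U"
      show "A w - (c w + eps v w) = zero_div U v F w - zero_div U v (\<lambda>u. f u - lam u) w"
      proof (cases "w = v")
        case True
        then show ?thesis unfolding zero_div_def c_def using sFU sA' by (simp add: eps_def)
      next
        case False
        then show ?thesis unfolding zero_div_def c_def using FU wU by (simp add: eps_def)
      qed
    qed
    ultimately show ?thesis unfolding Leff_dec by blast
  qed
qed

end

theorem mainTheorem5: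
  fixes V V1 U :: "'a set" and e :: "'a \<Rightarrow> 'a \<Rightarrow> nat" and v :: 'a and f :: "'a \<Rightarrow> int"
  assumes "graph V e"
    and "cut_vertex V e v"
    and "decomposes V e v V1 U"
    and "is_cycle U e"
    and "good U e (zero_div U v f)"
  shows "let r = div_rank V1 e (contract_div U v f);
             r2 = div_rank V1 e (\<lambda>u. contract_div U v f u - 2 * eps v u)
         in (r2 \<ge> r - 1 \<longrightarrow> div_rank V e f = r) \<and>
            (r2 = r - 2 \<longrightarrow> div_rank V e f = r - 1)"
proof -
  have finV: "finite V" and sy: "symm e" and ll: "\<forall>u. e u u = 0"
    using assms(1) unfolding graph_def symm_def by auto
  have VU: "V = V1 \<union> U" and VI: "V1 \<inter> U = {v}" and zr: "\<forall>a\<in>V1-{v}. \<forall>b\<in>U-{v}. e a b = 0"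
    using assms(3) unfolding decomposes_def by auto
  interpret dec2 V V1 U e v f
    by unfold_locales (use finV sy ll VU VI zr assms(4,5) in auto)
  have neV: "V \<noteq> {}" using vU VU by auto
  have neV1: "V1 \<noteq> {}" using vV1 by auto
  define R where "R = div_rank V e f"
  define r where "r = div_rank V1 e D1"
  define r2 where "r2 = div_rank V1 e D2"
  have H: "\<And>k::nat. int k \<le> R \<longleftrightarrow> int k \<le> r \<and> (k \<ge> 1 \<longrightarrow> int (k - 1) \<le> r2)"
  proof -
    fix k :: nat
    have "int k \<le> R \<longleftrightarrow> Pk V e f k" unfolding R_def by (rule rank_char[OF finV neV sy ll])
    also have "\<dots> \<longleftrightarrow> Pk V1 e D1 k \<and> (k \<ge> 1 \<longrightarrow> Pk V1 e D2 (k - 1))"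
      using fwd1 fwd2 bwd by blast
    also have "\<dots> \<longleftrightarrow> int k \<le> r \<and> (k \<ge> 1 \<longrightarrow> int (k - 1) \<le> r2)"
      unfolding r_def r2_def using rank_char[OF finV1 neV1 sy ll] by blast
    finally show "int k \<le> R \<longleftrightarrow> int k \<le> r \<and> (k \<ge> 1 \<longrightarrow> int (k - 1) \<le> r2)" .
  qed
  have "(r2 \<ge> r - 1 \<longrightarrow> R = r) \<and> (r2 = r - 2 \<longrightarrow> R = r - 1)"
    using final_arith[OF _ _ _ H] rank_ge unfolding R_def r_def r2_def by blast
  then show ?thesis unfolding Let_def R_def r_def r2_def D2_def D1_def .
qed

end
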